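(* Let the Markov jump process on the finite set $K$ with rates $W$ be irreducible with stationary distribution $\rho$, let $V:K\to\mathbb{R}$ and $b\in\mathbb{R}$. For small $h\in\mathbb{R}$ let $\mu=\mu_h$ be the stationary distribution of the perturbed dynamics with rates $W(x,y)e^{\frac{bh}{2}[V(y)-V(x)]}$. Then the dynamical fluctuation functional satisfies, as $h\to0$, \[ I(\mu)=-\frac{bh}{4}\sum_x\mu(x)\,LV(x)+o(h^2). \]
   Context: $W(x,y)\ge0$ are transition rates with backward generator $Lf(x)=\sum_yW(x,y)[f(y)-f(x)]$. For a probability distribution $\mu$ on $K$, the (Donsker–Varadhan) dynamical fluctuation functional of the occupation-time empirical distribution is $I(\mu)=-\inf_{g>0}\sum_x\mu(x)\frac{Lg(x)}{g(x)}$, the infimum over strictly positive functions $g:K\to\mathbb{R}$. *)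

theory Defs
  imports Complex_Main "HOL-Library.Landau_Symbols"
begin

definition gen :: "('a::finite \<Rightarrow> 'a \<Rightarrow> real) \<Rightarrow> ('a \<Rightarrow> real) \<Rightarrow> 'a \<Rightarrow> real" where
  "gen W f x = (\<Sum>y\<in>UNIV. W x y * (f y - f x))"

definition rates :: "('a::finite \<Rightarrow> 'a \<Rightarrow> real) \<Rightarrow> bool" where
  "rates W \<longleftrightarrow> (\<forall>x y. W x y \<ge> 0)"

definition irreducible_rates :: "('a::finite \<Rightarrow> 'a \<Rightarrow> real) \<Rightarrow> bool" where
  "irreducible_rates W \<longleftrightarrow> (\<forall>x y. (x, y) \<in> {(a, c). W a c > 0}\<^sup>*)"

definition prob_dist :: "('a::finite \<Rightarrow> real) \<Rightarrow> bool" where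
  "prob_dist \<mu> \<longleftrightarrow> (\<forall>x. \<mu> x \<ge> 0) \<and> (\<Sum>x\<in>UNIV. \<mu> x) = 1"

definition stationary :: "('a::finite \<Rightarrow> 'a \<Rightarrow> real) \<Rightarrow> ('a \<Rightarrow> real) \<Rightarrow> bool" where
  "stationary W \<mu> \<longleftrightarrow> prob_dist \<mu> \<and>
     (\<forall>y. (\<Sum>x\<in>UNIV. \<mu> x * W x y) - \<mu> y * (\<Sum>z\<in>UNIV. W y z) = 0)"

definition DV_I :: "('a::finite \<Rightarrow> 'a \<Rightarrow> real) \<Rightarrow> ('a \<Rightarrow> real) \<Rightarrow> real" where
  "DV_I W \<mu> = - (INF g \<in> {g :: 'a \<Rightarrow> real. \<forall>x. g x > 0}. \<Sum>x\<in>UNIV. \<mu> x * gen W g x / g x)"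

end

theory Submission
  imports Defs "HOL-Real_Asymp.Real_Asymp"
begin

lemma stat_zero:
  fixes Q :: "'a::finite \<Rightarrow> 'a \<Rightarrow> real"
  assumes "stationary Q m"
  shows "(\<Sum>x\<in>UNIV. \<Sum>y\<in>UNIV. m x * Q x y * (f y - f x)) = 0"
proof -
  from assms have st: "\<And>y. (\<Sum>x\<in>UNIV. m x * Q x y) - m y * (\<Sum>z\<in>UNIV. Q y z) = 0"
    unfolding stationary_def by blast
  have "0 = (\<Sum>y\<in>UNIV. f y * ((\<Sum>x\<in>UNIV. m x * Q x y) - m y * (\<Sum>z\<in>UNIV. Q y z)))"
    using st by simp
  also have "\<dots> = (\<Sum>y\<in>UNIV. \<Sum>x\<in>UNIV. m x * Q x y * f y) - (\<Sum>y\<in>UNIV. \<Sum>z\<in>UNIV. m y * Q y z * f y)"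
    by (simp add: right_diff_distrib sum_subtractf sum_distrib_left sum_distrib_right mult_ac)
  also have "\<dots> = (\<Sum>x\<in>UNIV. \<Sum>y\<in>UNIV. m x * Q x y * f y) - (\<Sum>x\<in>UNIV. \<Sum>y\<in>UNIV. m x * Q x y * f x)"
    by (subst sum.swap) simp
  also have "\<dots> = (\<Sum>x\<in>UNIV. \<Sum>y\<in>UNIV. m x * Q x y * (f y - f x))"
    by (simp add: right_diff_distrib sum_subtractf)
  finally show ?thesis by simp
qed

lemma gen_div:
  fixes W :: "'a::finite \<Rightarrow> 'a \<Rightarrow> real"
  assumes "g x > 0"
  shows "gen W g x / g x = (\<Sum>y\<in>UNIV. W x y * (g y / g x - 1))"
  using assms unfolding gen_def sum_divide_distrib
  by (intro sum.cong refl) (simp add: field_simps)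

lemma DV_value:
  fixes W :: "'a::finite \<Rightarrow> 'a \<Rightarrow> real"
  assumes W: "rates W" and st: "stationary (\<lambda>x y. W x y * exp (a * (V y - V x))) m"
  shows "DV_I W m = - (\<Sum>x\<in>UNIV. \<Sum>y\<in>UNIV. m x * W x y * (exp (a * (V y - V x)) - 1))"
proof -
  define F where "F g = (\<Sum>x\<in>UNIV. m x * gen W g x / g x)" for g :: "'a \<Rightarrow> real"
  define S where "S = {g :: 'a \<Rightarrow> real. \<forall>x. g x > 0}"
  define g0 where "g0 = (\<lambda>x. exp (a * V x))"
  have m0: "\<And>x. m x \<ge> 0" using st unfolding stationary_def prob_dist_def by blast
  have W0: "\<And>x y. W x y \<ge> 0" using W unfolding rates_def by blast
  have Fg: "F g = (\<Sum>x\<in>UNIV. \<Sum>y\<in>UNIV. m x * W x y * (g y / g x - 1))" if "g \<in> S" for g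
  proof -
    have "F g = (\<Sum>x\<in>UNIV. m x * (gen W g x / g x))" unfolding F_def by simp
    also have "\<dots> = (\<Sum>x\<in>UNIV. m x * (\<Sum>y\<in>UNIV. W x y * (g y / g x - 1)))"
      using that unfolding S_def by (simp add: gen_div)
    finally show ?thesis by (simp add: sum_distrib_left mult_ac)
  qed
  have g0S: "g0 \<in> S" unfolding S_def g0_def by simp
  have Fg0: "F g0 = (\<Sum>x\<in>UNIV. \<Sum>y\<in>UNIV. m x * W x y * (exp (a * (V y - V x)) - 1))"
    using Fg[OF g0S] unfolding g0_def by (simp add: exp_diff[symmetric] right_diff_distrib)
  have low: "F g0 \<le> F g" if "g \<in> S" for g
  proof -
    define f where "f z = ln (g z) - a * V z" for z
    have gp: "\<And>z. g z > 0" using that unfolding S_def by blast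
    have pt: "exp (a * (V y - V x)) - 1 + exp (a * (V y - V x)) * (f y - f x) \<le> g y / g x - 1" for x y
    proof -
      define E where "E = exp (a * (V y - V x))"
      define r where "r = g y / (g x * E)"
      have Ep: "E > 0" unfolding E_def by simp
      have rp: "r > 0" unfolding r_def using gp Ep by simp
      have "ln r \<le> r - 1" using ln_le_minus_one rp by blast
      have lnr: "ln r = f y - f x"
        unfolding r_def f_def E_def using gp[of x] gp[of y]
        by (simp add: ln_div ln_mult algebra_simps)
      have "g y / g x = E * r" unfolding r_def using Ep gp by (simp add: field_simps)
      hence "g y / g x - 1 = E - 1 + E * (r - 1)" by (simp add: algebra_simps)
      moreover have "E * (f y - f x) \<le> E * (r - 1)"
        using \<open>ln r \<le> r - 1\<close> lnr Ep by (simp add: mult_left_mono)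
      ultimately show ?thesis unfolding E_def[symmetric] by linarith
    qed
    have z: "(\<Sum>x\<in>UNIV. \<Sum>y\<in>UNIV. m x * (W x y * exp (a * (V y - V x))) * (f y - f x)) = 0"
      using stat_zero[OF st] .
    have "F g0 = (\<Sum>x\<in>UNIV. \<Sum>y\<in>UNIV. m x * W x y * (exp (a * (V y - V x)) - 1))
       + (\<Sum>x\<in>UNIV. \<Sum>y\<in>UNIV. m x * (W x y * exp (a * (V y - V x))) * (f y - f x))"
      using Fg0 z by simp
    also have "\<dots> = (\<Sum>x\<in>UNIV. \<Sum>y\<in>UNIV. m x * W x y * (exp (a * (V y - V x)) - 1 + exp (a * (V y - V x)) * (f y - f x)))"
      by (simp add: sum.distrib[symmetric] algebra_simps)
    also have "\<dots> \<le> (\<Sum>x\<in>UNIV. \<Sum>y\<in>UNIV. m x * W x y * (g y / g x - 1))"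
      by (intro sum_mono mult_left_mono pt mult_nonneg_nonneg m0 W0)
    also have "\<dots> = F g" using Fg[OF that] by simp
    finally show ?thesis .
  qed
  have "(INF g \<in> S. F g) = F g0"
  proof (rule antisym)
    show "(INF g \<in> S. F g) \<le> F g0"
      by (rule cINF_lower[OF _ g0S]) (auto intro: bdd_belowI2 low)
    show "F g0 \<le> (INF g \<in> S. F g)"
      using g0S by (intro cINF_greatest low) auto
  qed
  thus ?thesis unfolding DV_I_def using Fg0 by (simp add: F_def S_def)
qed

definition phi :: "real \<Rightarrow> real" where
  "phi t = 1 - exp t + t * (1 + exp t) / 2"

lemma phi_small: "phi \<in> o[at 0](\<lambda>t. t ^ 2)"
  unfolding phi_def by real_asymp

lemma phi_scaled: "(\<lambda>h. phi (c * h)) \<in> o[at (0::real)](\<lambda>h. h ^ 2)"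
proof (cases "c = 0")
  case True
  thus ?thesis by (simp add: phi_def)
next
  case False
  have lim: "filterlim (\<lambda>h. c * h) (at 0) (at (0::real))"
    using False by real_asymp
  have "(\<lambda>h. phi (c * h)) \<in> o[at 0](\<lambda>h. (c * h) ^ 2)"
    by (rule landau_o.small.compose[OF phi_small lim])
  thus ?thesis using False by (simp add: power_mult_distrib)
qed

theorem proposition3:
  fixes W :: "'a::finite \<Rightarrow> 'a \<Rightarrow> real" and \<rho> :: "'a \<Rightarrow> real"
    and V :: "'a \<Rightarrow> real" and b :: real and \<mu> :: "real \<Rightarrow> 'a \<Rightarrow> real"
  assumes "rates W" and "irreducible_rates W" and "stationary W \<rho>"
    and "\<And>h. stationary (\<lambda>x y. W x y * exp (b * h / 2 * (V y - V x))) (\<mu> h)"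
  shows "(\<lambda>h. DV_I W (\<mu> h) - (- (b * h / 4) * (\<Sum>x\<in>UNIV. \<mu> h x * gen W V x)))
           \<in> o[at 0](\<lambda>h. h ^ 2)"
proof -
  have eq: "DV_I W (\<mu> h) - (- (b * h / 4) * (\<Sum>x\<in>UNIV. \<mu> h x * gen W V x))
      = (\<Sum>x\<in>UNIV. \<Sum>y\<in>UNIV. \<mu> h x * W x y * phi (b / 2 * (V y - V x) * h))" for h
  proof -
    let ?E = "\<lambda>x y. exp (b * h / 2 * (V y - V x))"
    have st: "stationary (\<lambda>x y. W x y * ?E x y) (\<mu> h)" by (rule assms(4))
    have dv: "DV_I W (\<mu> h) = - (\<Sum>x\<in>UNIV. \<Sum>y\<in>UNIV. \<mu> h x * W x y * (?E x y - 1))"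
      by (rule DV_value[OF assms(1) st])
    have z: "(\<Sum>x\<in>UNIV. \<Sum>y\<in>UNIV. \<mu> h x * (W x y * ?E x y) * (V y - V x)) = 0"
      by (rule stat_zero[OF st])
    have gv: "(\<Sum>x\<in>UNIV. \<mu> h x * gen W V x) = (\<Sum>x\<in>UNIV. \<Sum>y\<in>UNIV. \<mu> h x * W x y * (V y - V x))"
      unfolding gen_def by (simp add: sum_distrib_left mult_ac)
    have "(\<Sum>x\<in>UNIV. \<Sum>y\<in>UNIV. \<mu> h x * W x y * phi (b / 2 * (V y - V x) * h))
      = (\<Sum>x\<in>UNIV. \<Sum>y\<in>UNIV. \<mu> h x * W x y * (1 - ?E x y)
          + (b * h / 4) * (\<mu> h x * W x y * (V y - V x))
          + (b * h / 4) * (\<mu> h x * (W x y * ?E x y) * (V y - V x)))"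
    proof (intro sum.cong refl)
      fix x y
      have a: "b / 2 * (V y - V x) * h = b * h / 2 * (V y - V x)" by simp
      show "\<mu> h x * W x y * phi (b / 2 * (V y - V x) * h) = \<mu> h x * W x y * (1 - ?E x y)
          + (b * h / 4) * (\<mu> h x * W x y * (V y - V x))
          + (b * h / 4) * (\<mu> h x * (W x y * ?E x y) * (V y - V x))"
      proof -
        define t where "t = b * h / 2 * (V y - V x)"
        have c: "b * h / 4 * (V y - V x) = t / 2" unfolding t_def by simp
        have "\<mu> h x * W x y * phi t = \<mu> h x * W x y * (1 - exp t)
          + (t / 2) * (\<mu> h x * W x y) + (t / 2) * (\<mu> h x * (W x y * exp t))"
          unfolding phi_def by (simp add: algebra_simps)
        moreover have "(t / 2) * (\<mu> h x * W x y) = (b * h / 4) * (\<mu> h x * W x y * (V y - V x))"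
          unfolding t_def by simp
        moreover have "(t / 2) * (\<mu> h x * (W x y * exp t)) = (b * h / 4) * (\<mu> h x * (W x y * exp t) * (V y - V x))"
          unfolding t_def by simp
        ultimately show ?thesis unfolding a t_def[symmetric] by linarith
      qed
    qed
    also have "\<dots> = DV_I W (\<mu> h) + (b * h / 4) * (\<Sum>x\<in>UNIV. \<mu> h x * gen W V x)
        + (b * h / 4) * (\<Sum>x\<in>UNIV. \<Sum>y\<in>UNIV. \<mu> h x * (W x y * ?E x y) * (V y - V x))"
      unfolding dv gv by (simp add: sum.distrib sum_distrib_left algebra_simps sum_subtractf sum_negf)
    finally show ?thesis using z by simp
  qed
  have trm: "(\<lambda>h. \<mu> h x * W x y * phi (b / 2 * (V y - V x) * h)) \<in> o[at 0](\<lambda>h. h ^ 2)" for x y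
  proof -
    have b1: "\<bar>\<mu> h x\<bar> \<le> 1" for h
    proof -
      have pd: "prob_dist (\<mu> h)" using assms(4)[of h] unfolding stationary_def by blast
      hence "\<And>z. \<mu> h z \<ge> 0" unfolding prob_dist_def by blast
      moreover have "\<mu> h x \<le> (\<Sum>z\<in>UNIV. \<mu> h z)"
        by (rule member_le_sum) (auto simp: calculation)
      ultimately show ?thesis using pd unfolding prob_dist_def by simp
    qed
    have "(\<lambda>h. \<mu> h x * W x y * phi (b / 2 * (V y - V x) * h)) \<in> O[at 0](\<lambda>h. phi (b / 2 * (V y - V x) * h))"
    proof (rule bigoI[where c = "\<bar>W x y\<bar>"], rule always_eventually, rule allI)
      fix h
      have "\<bar>\<mu> h x\<bar> * \<bar>W x y\<bar> * \<bar>phi (b / 2 * (V y - V x) * h)\<bar> \<le> 1 * \<bar>W x y\<bar> * \<bar>phi (b / 2 * (V y - V x) * h)\<bar>"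
        by (intro mult_right_mono b1) auto
      thus "norm (\<mu> h x * W x y * phi (b / 2 * (V y - V x) * h)) \<le> \<bar>W x y\<bar> * norm (phi (b / 2 * (V y - V x) * h))"
        by (simp add: abs_mult)
    qed
    thus ?thesis using phi_scaled by (rule landau_o.big_small_trans)
  qed
  have "(\<lambda>h. \<Sum>x\<in>UNIV. \<Sum>y\<in>UNIV. \<mu> h x * W x y * phi (b / 2 * (V y - V x) * h)) \<in> o[at 0](\<lambda>h. h ^ 2)"
    by (intro big_sum_in_smallo trm)
  thus ?thesis by (simp only: eq)
qed

end
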